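(* Let $n\ge 1$ and let $\mathcal{OCT}_n$ be the semigroup of all order-preserving full contractions of $[n]=\{1,\dots,n\}$. Let $\textnormal{Reg}(\mathcal{OCT}_n)$ be the set of regular elements of $\mathcal{OCT}_n$. Then $$|\textnormal{Reg}(\mathcal{OCT}_n)|=\frac{n(n-1)(2n-1)+6n}{6}.$$
   Context: $\mathcal{T}_n$ is the semigroup (under composition) of all maps $[n]\to[n]$. A map $\alpha\in\mathcal{T}_n$ is a contraction if $|x\alpha-y\alpha|\le |x-y|$ for all $x,y\in[n]$, and order-preserving if $x\le y$ implies $x\alpha\le y\alpha$. $\mathcal{OCT}_n$ is the set of order-preserving contractions, a subsemigroup of $\mathcal{T}_n$. An element $\alpha\in\mathcal{OCT}_n$ is regular if there is $\beta\in\mathcal{OCT}_n$ with $\alpha\beta\alpha=\alpha$. *)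

theory Defs
  imports Complex_Main "HOL-Library.FuncSet"
begin

definition T :: "nat \<Rightarrow> (nat \<Rightarrow> nat) set" where
  "T n = {1..n} \<rightarrow>\<^sub>E {1..n}"

text \<open>Composition written on the right: x(\<alpha>\<beta>) = (x\<alpha>)\<beta>.\<close>
definition tcomp :: "nat \<Rightarrow> (nat \<Rightarrow> nat) \<Rightarrow> (nat \<Rightarrow> nat) \<Rightarrow> (nat \<Rightarrow> nat)" where
  "tcomp n \<alpha> \<beta> = restrict (\<lambda>x. \<beta> (\<alpha> x)) {1..n}"

definition OCT :: "nat \<Rightarrow> (nat \<Rightarrow> nat) set" where
  "OCT n = {\<alpha> \<in> T n.
     (\<forall>x\<in>{1..n}. \<forall>y\<in>{1..n}. \<bar>int (\<alpha> x) - int (\<alpha> y)\<bar> \<le> \<bar>int x - int y\<bar>) \<and>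
     (\<forall>x\<in>{1..n}. \<forall>y\<in>{1..n}. x \<le> y \<longrightarrow> \<alpha> x \<le> \<alpha> y)}"

definition RegOCT :: "nat \<Rightarrow> (nat \<Rightarrow> nat) set" where
  "RegOCT n = {\<alpha> \<in> OCT n. \<exists>\<beta>\<in>OCT n. tcomp n (tcomp n \<alpha> \<beta>) \<alpha> = \<alpha>}"

end

theory Submission
  imports Defs
begin

definition G :: "nat \<Rightarrow> nat \<Rightarrow> nat \<Rightarrow> nat \<Rightarrow> (nat \<Rightarrow> nat)" where
  "G n a d s = restrict (\<lambda>x. a + min d (x - s)) {1..n}"

lemma G_OCT:
  assumes "1 \<le> a" "a + d \<le> n" "1 \<le> s" "s + d \<le> n"
  shows "G n a d s \<in> OCT n"
  using assms unfolding OCT_def T_def G_def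
  by (auto simp: min_def PiE_def)

lemma G_reg:
  assumes "1 \<le> a" "a + d \<le> n" "1 \<le> s" "s + d \<le> n"
  shows "tcomp n (tcomp n (G n a d s) (G n s d a)) (G n a d s) = G n a d s"
proof (rule ext)
  fix x
  show "tcomp n (tcomp n (G n a d s) (G n s d a)) (G n a d s) x = G n a d s x"
  proof (cases "x \<in> {1..n}")
    case True
    have r1: "a + min d (x - s) \<in> {1..n}" using assms by auto
    have r2: "s + min d (a + min d (x - s) - a) \<in> {1..n}" using assms by auto
    have e: "a + min d (s + min d (a + min d (x - s) - a) - s) = a + min d (x - s)" by simp
    have g1: "G n a d s x = a + min d (x - s)" using True unfolding G_def by simp
    have g2: "G n s d a (a + min d (x - s)) = s + min d (a + min d (x - s) - a)"
      using r1 unfolding G_def by simp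
    have g3: "G n a d s (s + min d (a + min d (x - s) - a)) = a + min d (s + min d (a + min d (x - s) - a) - s)"
      using r2 unfolding G_def by simp
    have t1: "tcomp n (G n a d s) (G n s d a) x = s + min d (a + min d (x - s) - a)"
      using True g1 g2 unfolding tcomp_def by simp
    show ?thesis using True t1 g3 e g1 unfolding tcomp_def by simp
  next
    case False
    have "tcomp n (tcomp n (G n a d s) (G n s d a)) (G n a d s) x = undefined"
      using False unfolding tcomp_def by auto
    moreover have "G n a d s x = undefined" using False unfolding G_def by auto
    ultimately show ?thesis by simp
  qed
qed

lemma ivt_nat:
  fixes f :: "nat \<Rightarrow> nat"
  assumes "\<And>i. lo \<le> i \<Longrightarrow> i < hi \<Longrightarrow> f (Suc i) \<le> f i + 1" "lo \<le> hi" "f lo \<le> v" "v \<le> f hi"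
  shows "\<exists>z\<in>{lo..hi}. f z = v"
  using assms
proof (induction hi)
  case 0
  then show ?case by auto
next
  case (Suc hi)
  show ?case
  proof (cases "lo = Suc hi")
    case True
    then show ?thesis using Suc.prems by auto
  next
    case False
    then have lh: "lo \<le> hi" using Suc.prems by auto
    show ?thesis
    proof (cases "v \<le> f hi")
      case True
      then obtain z where "z \<in> {lo..hi}" "f z = v" using Suc.IH[OF _ lh] Suc.prems by auto
      then show ?thesis by auto
    next
      case False
      then have "v = f (Suc hi)" using Suc.prems(1)[of hi] Suc.prems(4) lh by auto
      then show ?thesis using lh by auto
    qed
  qed
qed


lemma reg_form:
  assumes n1: "1 \<le> n" and aO: "\<alpha> \<in> OCT n" and bO: "\<beta> \<in> OCT n"
    and eq: "tcomp n (tcomp n \<alpha> \<beta>) \<alpha> = \<alpha>"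
  shows "\<exists>a d s. \<alpha> = G n a d s \<and> 1 \<le> a \<and> a + d \<le> n \<and> 1 \<le> s \<and> s + d \<le> n \<and> (d = 0 \<longrightarrow> s = 1)"
proof -
  have ext: "\<alpha> \<in> extensional {1..n}" using aO unfolding OCT_def T_def by (auto simp: PiE_def)
  have rng: "\<And>x. x \<in> {1..n} \<Longrightarrow> \<alpha> x \<in> {1..n}" using aO unfolding OCT_def T_def by auto
  have mono: "\<And>x y. x \<in> {1..n} \<Longrightarrow> y \<in> {1..n} \<Longrightarrow> x \<le> y \<Longrightarrow> \<alpha> x \<le> \<alpha> y"
    using aO unfolding OCT_def by auto
  have con: "\<And>x y. x \<in> {1..n} \<Longrightarrow> y \<in> {1..n} \<Longrightarrow> \<bar>int (\<alpha> x) - int (\<alpha> y)\<bar> \<le> \<bar>int x - int y\<bar>"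
    using aO unfolding OCT_def by auto
  have brng: "\<And>x. x \<in> {1..n} \<Longrightarrow> \<beta> x \<in> {1..n}" using bO unfolding OCT_def T_def by auto
  have bcon: "\<And>x y. x \<in> {1..n} \<Longrightarrow> y \<in> {1..n} \<Longrightarrow> \<bar>int (\<beta> x) - int (\<beta> y)\<bar> \<le> \<bar>int x - int y\<bar>"
    using bO unfolding OCT_def by auto
  have fx: "\<alpha> (\<beta> (\<alpha> w)) = \<alpha> w" if w: "w \<in> {1..n}" for w
  proof -
    have "tcomp n (tcomp n \<alpha> \<beta>) \<alpha> w = \<alpha> w" using eq by simp
    then show ?thesis using w rng[OF w] unfolding tcomp_def by simp
  qed
  have step: "\<alpha> (Suc x) \<le> \<alpha> x + 1" if "1 \<le> x" "x < n" for x
    using con[of "Suc x" x] that by auto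
  have ivt: "\<exists>z\<in>{lo..hi}. \<alpha> z = v"
    if "lo \<in> {1..n}" "hi \<in> {1..n}" "lo \<le> hi" "\<alpha> lo \<le> v" "v \<le> \<alpha> hi" for lo hi v
    by (rule ivt_nat) (use that step in auto)
  define a where "a = \<alpha> 1"
  define b where "b = \<alpha> n"
  have ab: "a \<le> \<alpha> x \<and> \<alpha> x \<le> b" if "x \<in> {1..n}" for x
    using mono[of 1 x] mono[of x n] that n1 unfolding a_def b_def by auto
  have a1: "1 \<le> a" and bn: "b \<le> n" and aleb: "a \<le> b"
    using rng[of 1] rng[of n] n1 ab[of 1] unfolding a_def b_def by auto
  define d where "d = b - a"
  show ?thesis
  proof (cases "d = 0")
    case True
    have "\<alpha> = G n a 0 1"
    proof (rule extensionalityI[OF ext])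
      show "G n a 0 1 \<in> extensional {1..n}" unfolding G_def by simp
      fix x assume x: "x \<in> {1..n}"
      then show "\<alpha> x = G n a 0 1 x" using ab[OF x] True unfolding d_def G_def by auto
    qed
    moreover have "1 \<le> a \<and> a + 0 \<le> n \<and> 1 \<le> (1::nat) \<and> 1 + 0 \<le> n"
      using a1 aleb bn n1 by auto
    ultimately show ?thesis by blast
  next
    case False
    define S where "S = {x\<in>{1..n}. \<alpha> x = a}"
    define s where "s = Max S"
    have finS: "finite S" unfolding S_def by auto
    have oneS: "1 \<in> S" unfolding S_def a_def using n1 by auto
    have sS: "s \<in> S" unfolding s_def using finS oneS Max_in by blast
    have sMax: "x \<le> s" if "x \<in> S" for x unfolding s_def using finS that by simp
    have s1n: "s \<in> {1..n}" and as: "\<alpha> s = a" using sS unfolding S_def by auto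
    have flat: "\<alpha> x = a \<or> \<alpha> x = b"
      if x: "x \<in> {1..n}" "Suc x \<le> n" "\<alpha> x = \<alpha> (Suc x)" for x
    proof (rule ccontr)
      assume nab: "\<not> (\<alpha> x = a \<or> \<alpha> x = b)"
      define y where "y = \<alpha> x"
      have ay: "a < y" "y < b" using ab[OF x(1)] nab unfolding y_def by auto
      have "\<exists>z\<in>{1..x}. \<alpha> z = y - 1"
        by (rule ivt) (use x ay in \<open>auto simp: a_def y_def\<close>)
      then obtain z1 where z1: "z1 \<in> {1..x}" "\<alpha> z1 = y - 1" by blast
      have "\<exists>z\<in>{Suc x..n}. \<alpha> z = y + 1"
        by (rule ivt) (use x ay in \<open>auto simp: b_def y_def\<close>)
      then obtain z2 where z2: "z2 \<in> {Suc x..n}" "\<alpha> z2 = y + 1" by blast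
      have z1n: "z1 \<in> {1..n}" and z2n: "z2 \<in> {1..n}" using z1 z2 x by auto
      define p where "p = \<beta> (y - 1)"
      define q where "q = \<beta> y"
      define r where "r = \<beta> (y + 1)"
      have ap: "\<alpha> p = y - 1" using fx[OF z1n] z1 unfolding p_def by simp
      have aq: "\<alpha> q = y" using fx[OF x(1)] unfolding q_def y_def by simp
      have ar: "\<alpha> r = y + 1" using fx[OF z2n] z2 unfolding r_def by simp
      have ym: "y - 1 \<in> {1..n}" using rng[OF z1n] z1 by simp
      have yy: "y \<in> {1..n}" using rng[OF x(1)] unfolding y_def by simp
      have yp: "y + 1 \<in> {1..n}" using rng[OF z2n] z2 by simp
      have pn: "p \<in> {1..n}" "q \<in> {1..n}" "r \<in> {1..n}"
        using brng[OF ym] brng[OF yy] brng[OF yp] unfolding p_def q_def r_def by auto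
      have c1: "\<bar>int q - int p\<bar> \<le> 1" using bcon[OF yy ym] ay unfolding p_def q_def by auto
      have c2: "\<bar>int r - int q\<bar> \<le> 1" using bcon[OF yp yy] unfolding r_def q_def by auto
      have pq: "p < q"
      proof (rule ccontr)
        assume "\<not> p < q"
        then have "\<alpha> q \<le> \<alpha> p" using mono pn by auto
        then show False using ap aq ay by auto
      qed
      have qr: "q < r"
      proof (rule ccontr)
        assume "\<not> q < r"
        then have "\<alpha> r \<le> \<alpha> q" using mono pn by auto
        then show False using ar aq by auto
      qed
      have q1: "q = Suc p" "r = Suc q" using c1 c2 pq qr by auto
      show False
      proof (cases "x \<le> p")
        case True
        then have "\<alpha> x \<le> \<alpha> p" using mono[of x p] pn x by auto
        then show False using ap ay unfolding y_def by auto
      next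
        case False
        then have "r \<le> Suc x" using q1 by auto
        then have "\<alpha> r \<le> \<alpha> (Suc x)" using mono[of r "Suc x"] pn x by auto
        then show False using ar x(3) unfolding y_def by auto
      qed
    qed
    have ind: "\<alpha> (s + k) = a + min d k" if "s + k \<le> n" for k
      using that
    proof (induction k)
      case 0
      then show ?case using as by simp
    next
      case (Suc k)
      have IH: "\<alpha> (s + k) = a + min d k" using Suc by simp
      have skn: "s + k \<in> {1..n}" using Suc.prems s1n by auto
      have sk1: "s + Suc k \<in> {1..n}" using Suc.prems s1n by auto
      have m: "\<alpha> (s + k) \<le> \<alpha> (s + Suc k)" using mono[OF skn sk1] by simp
      have st: "\<alpha> (s + Suc k) \<le> \<alpha> (s + k) + 1" using step[of "s + k"] skn Suc.prems by auto
      have bb: "\<alpha> (s + Suc k) \<le> b" using ab[OF sk1] by simp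
      show ?case
      proof (cases "k < d")
        case True
        have ne: "\<alpha> (s + k) \<noteq> \<alpha> (Suc (s + k))"
        proof
          assume e: "\<alpha> (s + k) = \<alpha> (Suc (s + k))"
          have "\<alpha> (s + k) = a \<or> \<alpha> (s + k) = b" using flat[OF skn _ e] Suc.prems by simp
          then show False
          proof
            assume "\<alpha> (s + k) = a"
            then have "k = 0" using IH True by auto
            then have "Suc s \<in> S" using e as sk1 unfolding S_def by auto
            then show False using sMax by fastforce
          qed (use IH True aleb d_def in auto)
        qed
        then show ?thesis using m st IH True by auto
      next
        case False
        then show ?thesis using m bb IH unfolding d_def using aleb by auto
      qed
    qed
    have "\<alpha> = G n a d s"
    proof (rule extensionalityI[OF ext])
      show "G n a d s \<in> extensional {1..n}" unfolding G_def by simp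
      fix x assume x: "x \<in> {1..n}"
      show "\<alpha> x = G n a d s x"
      proof (cases "x \<le> s")
        case True
        then have "\<alpha> x \<le> a" using mono[OF x s1n] as by simp
        then show ?thesis using ab[OF x] x True unfolding G_def by auto
      next
        case False
        then have "\<alpha> (s + (x - s)) = a + min d (x - s)" using ind[of "x - s"] x by auto
        then show ?thesis using False x unfolding G_def by auto
      qed
    qed
    moreover have "s + d \<le> n"
    proof -
      have "\<alpha> (s + (n - s)) = a + min d (n - s)" using ind[of "n - s"] s1n by auto
      then have "b = a + min d (n - s)" using s1n unfolding b_def by auto
      then show ?thesis using aleb s1n unfolding d_def by auto
    qed
    moreover have "a + d \<le> n" using aleb bn unfolding d_def by auto
    ultimately show ?thesis using a1 s1n False by (intro exI[of _ a] exI[of _ d] exI[of _ s]) auto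
  qed
qed


definition P :: "nat \<Rightarrow> (nat \<times> nat \<times> nat) set" where
  "P n = ({0} \<times> ({1..n} \<times> {1})) \<union> (SIGMA d:{1..<n}. {1..n-d} \<times> {1..n-d})"

lemma P_iff: "(d, a, s) \<in> P n \<longleftrightarrow> 1 \<le> a \<and> a + d \<le> n \<and> 1 \<le> s \<and> s + d \<le> n \<and> (d = 0 \<longrightarrow> s = 1)"
  unfolding P_def by auto

lemma RegOCT_eq:
  assumes "1 \<le> n"
  shows "RegOCT n = (\<lambda>(d, a, s). G n a d s) ` P n"
proof
  show "RegOCT n \<subseteq> (\<lambda>(d, a, s). G n a d s) ` P n"
  proof
    fix \<alpha> assume "\<alpha> \<in> RegOCT n"
    then obtain \<beta> where "\<alpha> \<in> OCT n" "\<beta> \<in> OCT n" "tcomp n (tcomp n \<alpha> \<beta>) \<alpha> = \<alpha>"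
      unfolding RegOCT_def by auto
    from reg_form[OF assms this] obtain a d s where
      "\<alpha> = G n a d s" "1 \<le> a \<and> a + d \<le> n \<and> 1 \<le> s \<and> s + d \<le> n \<and> (d = 0 \<longrightarrow> s = 1)"
      by blast
    then show "\<alpha> \<in> (\<lambda>(d, a, s). G n a d s) ` P n"
      using P_iff[of d a s n] by (auto intro!: image_eqI[of _ _ "(d, a, s)"])
  qed
next
  show "(\<lambda>(d, a, s). G n a d s) ` P n \<subseteq> RegOCT n"
  proof
    fix \<alpha> assume "\<alpha> \<in> (\<lambda>(d, a, s). G n a d s) ` P n"
    then obtain d a s where e: "\<alpha> = G n a d s" and p: "(d, a, s) \<in> P n" by auto
    have c: "1 \<le> a" "a + d \<le> n" "1 \<le> s" "s + d \<le> n" using p P_iff by auto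
    show "\<alpha> \<in> RegOCT n" unfolding RegOCT_def e
      using G_OCT[OF c] G_OCT[of s d n a] G_reg[OF c] c by auto
  qed
qed

lemma G_at:
  assumes "x \<in> {1..n}" shows "G n a d s x = a + min d (x - s)"
  using assms unfolding G_def by simp

lemma inj_P: "inj_on (\<lambda>(d, a, s). G n a d s) (P n)"
proof (rule inj_onI)
  fix u v assume u: "u \<in> P n" and v: "v \<in> P n"
    and e: "(\<lambda>(d, a, s). G n a d s) u = (\<lambda>(d, a, s). G n a d s) v"
  obtain d a s where u': "u = (d, a, s)" by (cases u) auto
  obtain d' a' s' where v': "v = (d', a', s')" by (cases v) auto
  have c: "1 \<le> a" "a + d \<le> n" "1 \<le> s" "s + d \<le> n" "d = 0 \<longrightarrow> s = 1"
    using u u' P_iff by auto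
  have c': "1 \<le> a'" "a' + d' \<le> n" "1 \<le> s'" "s' + d' \<le> n" "d' = 0 \<longrightarrow> s' = 1"
    using v v' P_iff by auto
  have E: "G n a d s = G n a' d' s'" using e u' v' by simp
  have "G n a d s 1 = G n a' d' s' 1" using E by simp
  then have aa: "a = a'" using c c' G_at[of 1 n] by auto
  have "G n a d s n = G n a' d' s' n" using E by simp
  then have dd: "d = d'" using c c' G_at[of n n] aa by auto
  have ss: "s = s'"
  proof (cases "d = 0")
    case True then show ?thesis using c c' dd by auto
  next
    case False
    show ?thesis
    proof (rule ccontr)
      assume "s \<noteq> s'"
      then consider "s < s'" | "s' < s" by linarith
      then show False
      proof cases
        case 1
        have "G n a d s (Suc s) = G n a' d' s' (Suc s)" using E by simp
        then show False using 1 c c' False G_at[of "Suc s" n] aa dd by auto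
      next
        case 2
        have "G n a d s (Suc s') = G n a' d' s' (Suc s')" using E by simp
        then show False using 2 c c' False G_at[of "Suc s'" n] aa dd by auto
      qed
    qed
  qed
  show "u = v" using u' v' aa dd ss by simp
qed

lemma card_P: "card (P n) = n + (\<Sum>d\<in>{1..<n}. (n - d) * (n - d))"
proof -
  have "card (P n) = card ({0::nat} \<times> ({1..n} \<times> {1::nat})) + card (SIGMA d:{1..<n}. {1..n-d} \<times> {1..n-d})"
    unfolding P_def by (intro card_Un_disjoint) auto
  also have "card ({0::nat} \<times> ({1..n} \<times> {1::nat})) = n" by (simp add: card_cartesian_product)
  also have "card (SIGMA d:{1..<n}. {1..n-d} \<times> {1..n-d}) = (\<Sum>d\<in>{1..<n}. (n - d) * (n - d))"
    by (simp add: card_cartesian_product)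
  finally show ?thesis .
qed

lemma sum_sq: "real (\<Sum>j<n. j * j) = real n * (real n - 1) * (2 * real n - 1) / 6"
  by (induction n) (auto simp: algebra_simps)

theorem theorem2:
  fixes n :: nat
  assumes "n \<ge> 1"
  shows "real (card (RegOCT n)) = (real n * (real n - 1) * (2 * real n - 1) + 6 * real n) / 6"
proof -
  have "card (RegOCT n) = card (P n)"
    using RegOCT_eq[OF assms] card_image[OF inj_P] by simp
  also have "\<dots> = n + (\<Sum>d\<in>{1..<n}. (n - d) * (n - d))" by (rule card_P)
  also have "(\<Sum>d\<in>{1..<n}. (n - d) * (n - d)) = (\<Sum>j\<in>{1..<n}. j * j)"
    using sum.atLeastLessThan_rev[of "\<lambda>j. j * j" 1 n] by simp
  also have "(\<Sum>j\<in>{1..<n}. j * j) = (\<Sum>j<n. j * j)"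
  proof -
    have "{..<n} = insert 0 {1..<n}" using assms by auto
    then show ?thesis by simp
  qed
  finally have "real (card (RegOCT n)) = real n + real (\<Sum>j<n. j * j)" by simp
  then show ?thesis using sum_sq[of n] by (simp add: field_simps)
qed

end
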